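(* Let $n\ge2$ and let $L_1,\dots,L_n$ be closed line segments parallel to the $y$-axis, where $L_i$ has end-points $A_i(x_i,a_i)$ and $B_i(x_i,b_i)$ with $a_i\le b_i$ for all $i$, and $x_1<x_2<\dots<x_n$. Let $s<t$ be indices such that the slope of the line $A_sB_t$ is the minimum of the slopes of the lines $A_iB_j$ over all $1\le i<j\le n$, and let $u<v$ be indices such that the slope of the line $B_uA_v$ is the maximum of the slopes of the lines $B_iA_j$ over all $1\le i<j\le n$. Assume that at least one straight line intersects all the segments $L_1,\dots,L_n$. Then, among all straight lines intersecting all the segments $L_1,\dots,L_n$, the line $A_sB_t$ has the maximum slope and the line $B_uA_v$ has the minimum slope. *)

theory Defs
  imports Complex_Main
begin

text \<open>Segment i: vertical segment from (x i, a i) to (x i, b i).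
  A non-vertical line y = m*X + c meets segment i iff a i <= m * x i + c <= b i.\<close>
definition meets_all :: "nat \<Rightarrow> (nat \<Rightarrow> real) \<Rightarrow> (nat \<Rightarrow> real) \<Rightarrow> (nat \<Rightarrow> real) \<Rightarrow> real \<Rightarrow> real \<Rightarrow> bool" where
  "meets_all n x a b m c \<longleftrightarrow> (\<forall>i\<in>{1..n}. a i \<le> m * x i + c \<and> m * x i + c \<le> b i)"

definition slope :: "real \<Rightarrow> real \<Rightarrow> real \<Rightarrow> real \<Rightarrow> real" where
  "slope x1 y1 x2 y2 = (y2 - y1) / (x2 - x1)"

end

theory Submission
  imports Defs
begin

lemma slope_le_imp: "x1 < x2 \<Longrightarrow> M \<le> slope x1 y1 x2 y2 \<Longrightarrow> M * (x2 - x1) \<le> y2 - y1"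
  unfolding slope_def by (simp add: pos_le_divide_eq)

lemma slope_ge_imp: "x1 < x2 \<Longrightarrow> slope x1 y1 x2 y2 \<le> M \<Longrightarrow> y2 - y1 \<le> M * (x2 - x1)"
  unfolding slope_def by (simp add: pos_divide_le_eq)

lemma slope_eq: "x1 < x2 \<Longrightarrow> slope x1 y1 x2 y2 * (x2 - x1) = y2 - y1"
  unfolding slope_def by simp

theorem corollary2:
  fixes n :: nat and x a b :: "nat \<Rightarrow> real" and s t u v :: nat
  assumes "n \<ge> 2"
    and "\<And>i. i \<in> {1..n} \<Longrightarrow> a i \<le> b i"
    and "\<And>i j. i \<in> {1..n} \<Longrightarrow> j \<in> {1..n} \<Longrightarrow> i < j \<Longrightarrow> x i < x j"
    and "1 \<le> s" "s < t" "t \<le> n"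
    and "\<And>i j. 1 \<le> i \<Longrightarrow> i < j \<Longrightarrow> j \<le> n \<Longrightarrow>
           slope (x s) (a s) (x t) (b t) \<le> slope (x i) (a i) (x j) (b j)"
    and "1 \<le> u" "u < v" "v \<le> n"
    and "\<And>i j. 1 \<le> i \<Longrightarrow> i < j \<Longrightarrow> j \<le> n \<Longrightarrow>
           slope (x i) (b i) (x j) (a j) \<le> slope (x u) (b u) (x v) (a v)"
    and "\<exists>m c. meets_all n x a b m c"
  shows "meets_all n x a b (slope (x s) (a s) (x t) (b t)) (a s - slope (x s) (a s) (x t) (b t) * x s)
       \<and> (\<forall>m c. meets_all n x a b m c \<longrightarrow> m \<le> slope (x s) (a s) (x t) (b t))
       \<and> meets_all n x a b (slope (x u) (b u) (x v) (a v)) (b u - slope (x u) (b u) (x v) (a v) * x u)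
       \<and> (\<forall>m c. meets_all n x a b m c \<longrightarrow> slope (x u) (b u) (x v) (a v) \<le> m)"
proof -
  define M where "M = slope (x s) (a s) (x t) (b t)"
  define N where "N = slope (x u) (b u) (x v) (a v)"
  have X: "\<And>i j. 1 \<le> i \<Longrightarrow> i < j \<Longrightarrow> j \<le> n \<Longrightarrow> x i < x j" using assms(3) by auto
  have Xle: "\<And>i j. 1 \<le> i \<Longrightarrow> i \<le> j \<Longrightarrow> j \<le> n \<Longrightarrow> x i \<le> x j"
    by (metis X le_less order_refl)
  have MA: "\<And>i j. 1 \<le> i \<Longrightarrow> i < j \<Longrightarrow> j \<le> n \<Longrightarrow> M * (x j - x i) \<le> b j - a i"
    unfolding M_def using assms(7) X slope_le_imp by blast
  have NA: "\<And>i j. 1 \<le> i \<Longrightarrow> i < j \<Longrightarrow> j \<le> n \<Longrightarrow> a j - b i \<le> N * (x j - x i)"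
    unfolding N_def using assms(11) X slope_ge_imp by blast
  have Mst: "M * (x t - x s) = b t - a s" unfolding M_def using X assms slope_eq by auto
  have Nuv: "N * (x v - x u) = a v - b u" unfolding N_def using X assms slope_eq by auto
  have up: "m \<le> M" if T: "meets_all n x a b m c" for m c
  proof -
    have "a s \<le> m * x s + c" "m * x t + c \<le> b t" using T assms unfolding meets_all_def by auto
    hence "m * (x t - x s) \<le> M * (x t - x s)" using Mst by (simp add: algebra_simps)
    moreover have "x t - x s > 0" using X assms by auto
    ultimately show ?thesis by simp
  qed
  have lo: "N \<le> m" if T: "meets_all n x a b m c" for m c
  proof -
    have "m * x u + c \<le> b u" "a v \<le> m * x v + c" using T assms unfolding meets_all_def by auto
    hence "N * (x v - x u) \<le> m * (x v - x u)" using Nuv by (simp add: algebra_simps)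
    moreover have "x v - x u > 0" using X assms by auto
    ultimately show ?thesis by simp
  qed
  obtain m c where T: "meets_all n x a b m c" using assms(12) by blast
  have Tb: "\<And>i. 1 \<le> i \<Longrightarrow> i \<le> n \<Longrightarrow> a i \<le> m * x i + c \<and> m * x i + c \<le> b i"
    using T unfolding meets_all_def by auto
  have mM: "m \<le> M" using up T by blast
  have Nm: "N \<le> m" using lo T by blast
  have P1: "meets_all n x a b M (a s - M * x s)"
    unfolding meets_all_def
  proof
    fix i assume i: "i \<in> {1..n}"
    have "a i \<le> M * x i + (a s - M * x s)"
    proof (cases "i < t")
      case True
      have "M * (x t - x i) \<le> b t - a i" using MA[of i t] True i assms by auto
      thus ?thesis using Mst by (simp add: algebra_simps)
    next
      case False
      hence ti: "t \<le> i" by simp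
      have "a i \<le> m * x i + c" "m * x t + c \<le> b t" using Tb i assms by auto
      moreover have "m * (x i - x t) \<le> M * (x i - x t)"
        using mM Xle[of t i] ti i assms by (intro mult_right_mono) auto
      ultimately show ?thesis using Mst by (simp add: algebra_simps)
    qed
    moreover have "M * x i + (a s - M * x s) \<le> b i"
    proof (cases "s < i")
      case True
      have "M * (x i - x s) \<le> b i - a s" using MA[of s i] True i assms by auto
      thus ?thesis by (simp add: algebra_simps)
    next
      case False
      hence ti: "i \<le> s" by simp
      have "m * x i + c \<le> b i" "a s \<le> m * x s + c" using Tb i assms by auto
      moreover have "m * (x s - x i) \<ge> M * (x s - x i) - M * (x s - x i) + m * (x s - x i)" by simp
      moreover have "M * (x s - x i) \<ge> m * (x s - x i)"
        using mM Xle[of i s] ti i assms by (intro mult_right_mono) auto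
      ultimately show ?thesis by (simp add: algebra_simps)
    qed
    ultimately show "a i \<le> M * x i + (a s - M * x s) \<and> M * x i + (a s - M * x s) \<le> b i" by simp
  qed
  have P2: "meets_all n x a b N (b u - N * x u)"
    unfolding meets_all_def
  proof
    fix i assume i: "i \<in> {1..n}"
    have "N * x i + (b u - N * x u) \<le> b i"
    proof (cases "i < v")
      case True
      show ?thesis
      proof (cases "i = v")
        case False
        have "a v - b i \<le> N * (x v - x i)" using NA[of i v] True i assms by auto
        thus ?thesis using Nuv by (simp add: algebra_simps)
      qed (use True in auto)
    next
      case False
      hence ti: "v \<le> i" by simp
      have "m * x i + c \<le> b i" "a v \<le> m * x v + c" using Tb i assms by auto
      moreover have "N * (x i - x v) \<le> m * (x i - x v)"
        using Nm Xle[of v i] ti i assms by (intro mult_right_mono) auto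
      ultimately show ?thesis using Nuv by (simp add: algebra_simps)
    qed
    moreover have "a i \<le> N * x i + (b u - N * x u)"
    proof (cases "u < i")
      case True
      have "a i - b u \<le> N * (x i - x u)" using NA[of u i] True i assms by auto
      thus ?thesis by (simp add: algebra_simps)
    next
      case False
      hence ti: "i \<le> u" by simp
      have "a i \<le> m * x i + c" "m * x u + c \<le> b u" using Tb i assms by auto
      moreover have "N * (x u - x i) \<le> m * (x u - x i)"
        using Nm Xle[of i u] ti i assms by (intro mult_right_mono) auto
      ultimately show ?thesis by (simp add: algebra_simps)
    qed
    ultimately show "a i \<le> N * x i + (b u - N * x u) \<and> N * x i + (b u - N * x u) \<le> b i" by simp
  qed
  show ?thesis using P1 P2 up lo unfolding M_def N_def by blast
qed

end
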